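(* Fix $p$ and $q$, and let $\widetilde{\mathrm{gr}}$ refer to the absolute $\mathbb{Q}$-grading on $\widehat{HF}(-L(p,q))$. For $0\leq i<p$, $$\widetilde{\mathrm{gr}}(x_{i+q\!\!\mod {p}}) - \widetilde{\mathrm{gr}}(x_i)={1\over p}(p-1-2i).$$
   Context: $p>q$ are relatively prime positive integers. $-L(p,q)$ has the pointed Heegaard diagram with $\Sigma$ the torus $[0,1]\times[0,1]$ with edges identified, $\alpha$ the horizontal circle $y=1/2$, $\beta$ a circle of slope $-p/q$, and $z$ a point below $y=1/2$. The $p$ points of $\alpha\cap\beta$ are labeled $x_0,\ldots,x_{p-1}$ from left to right along $\alpha$, where $x_0$ is the upper right vertex of the region containing $z$ (regions $D_0,\dots,D_{p-1}$ labeled left to right with $z\in D_0$). Each $x_i$ is in a distinct $\mathrm{Spin}^c$ structure and $\widehat{CF}=\widehat{HF}(-L(p,q))$. $\widetilde{\mathrm{gr}}$ is Ozsváth–Szabó's absolute $\mathbb{Q}$-grading, which satisfies, for $0\le i<p+q$, $\widetilde{\mathrm{gr}}_{p,q}(x_{i \bmod p})=\frac{pq-(2i+1-p-q)^2}{4pq}-\widetilde{\mathrm{gr}}_{q,p\bmod q}(x_{i\bmod q})$. *)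

theory Defs
  imports Complex_Main
begin

text \<open>Absolute Q-grading of the generator x_i of HF-hat(-L(p,q)), 0 <= i < p,
  determined by the Ozsvath--Szabo recursion
  gr_{p,q}(x_i) = (pq - (2i+1-p-q)^2)/(4pq) - gr_{q, p mod q}(x_{i mod q}),
  with base case L(1,0) = S^3 whose unique generator has grading 0.\<close>
function gr :: "nat \<Rightarrow> nat \<Rightarrow> nat \<Rightarrow> rat" where
  "gr p q i = (if q = 0 then 0 else
     of_int (int p * int q - (2 * int i + 1 - int p - int q)^2) / of_int (4 * int p * int q)
     - gr q (p mod q) (i mod q))"
  by auto
termination by (relation "measure (\<lambda>(p, q, i). q)") auto

end

theory Submission
  imports Defs
begin

lemma gr_pos: "0 < q \<Longrightarrow> gr p q i =
  of_int (int p * int q - (2 * int i + 1 - int p - int q)^2) / of_int (4 * int p * int q)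
     - gr q (p mod q) (i mod q)"
  by (subst gr.simps) simp

lemma alg2:
  fixes P Q M :: int
  assumes "P > 0" "Q > 0"
  shows "(of_int (P * Q - (2 * M + 1 - P - Q)^2) / of_int (4 * P * Q)
        - of_int (P * Q - (2 * (M + P - Q) + 1 - P - Q)^2) / of_int (4 * P * Q)
        + of_int (Q - 1 - 2 * M) / of_int Q :: rat) = of_int (P - 1 - 2 * (M + P - Q)) / of_int P"
proof -
  have "4*P*Q \<noteq> 0" using assms by simp
  have e: "(P * Q - (2 * M + 1 - P - Q)^2) - (P * Q - (2 * (M + P - Q) + 1 - P - Q)^2) + 4*P*(Q - 1 - 2 * M)
     = 4*Q*(P - 1 - 2 * (M + P - Q))" by (simp add: algebra_simps power2_eq_square)
  have "(of_int (P * Q - (2 * M + 1 - P - Q)^2) / of_int (4 * P * Q)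
        - of_int (P * Q - (2 * (M + P - Q) + 1 - P - Q)^2) / of_int (4 * P * Q)
        + of_int (Q - 1 - 2 * M) / of_int Q :: rat) = of_int ((P * Q - (2 * M + 1 - P - Q)^2) - (P * Q - (2 * (M + P - Q) + 1 - P - Q)^2) + 4*P*(Q - 1 - 2 * M)) / of_int (4*P*Q)"
    using assms by (simp add: divide_simps)
  also have "\<dots> = of_int (4*Q*(P - 1 - 2 * (M + P - Q))) / of_int (4*P*Q)" by (simp only: e)
  also have "\<dots> = of_int (P - 1 - 2 * (M + P - Q)) / of_int P" using assms by (simp add: divide_simps)
  finally show ?thesis .
qed

lemma gr10: "gr p 0 i = 0" by (subst gr.simps) simp

lemma alg1:
  fixes P Q I :: int
  assumes "P > 0" "Q > 0"
  shows "(of_int (P * Q - (2 * (I + Q) + 1 - P - Q)^2) / of_int (4 * P * Q)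
        - of_int (P * Q - (2 * I + 1 - P - Q)^2) / of_int (4 * P * Q) :: rat) = of_int (P - 1 - 2 * I) / of_int P"
proof -
  have e: "(P * Q - (2 * (I + Q) + 1 - P - Q)^2) - (P * Q - (2 * I + 1 - P - Q)^2)
     = 4*Q*(P - 1 - 2 * I)" by (simp add: algebra_simps power2_eq_square)
  have "(of_int (P * Q - (2 * (I + Q) + 1 - P - Q)^2) / of_int (4 * P * Q)
        - of_int (P * Q - (2 * I + 1 - P - Q)^2) / of_int (4 * P * Q) :: rat)
     = of_int ((P * Q - (2 * (I + Q) + 1 - P - Q)^2) - (P * Q - (2 * I + 1 - P - Q)^2)) / of_int (4*P*Q)"
    using assms by (simp add: divide_simps)
  also have "\<dots> = of_int (4*Q*(P - 1 - 2 * I)) / of_int (4*P*Q)" by (simp only: e)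
  also have "\<dots> = of_int (P - 1 - 2 * I) / of_int P" using assms by (simp add: divide_simps)
  finally show ?thesis .
qed

lemma gen:
  fixes p q i :: nat
  assumes "q < p" and "coprime p q" and "i < p"
  shows "gr p q ((i + q) mod p) - gr p q i = (of_int (int p - 1 - 2 * int i)) / of_nat p"
  using assms
proof (induction q arbitrary: p i rule: less_induct)
  case (less q)
  show ?case
  proof (cases "q = 0")
    case True
    then have "p = 1" using less by simp
    then show ?thesis using less True by (simp add: gr10)
  next
    case False
    then have qp: "0 < q" by simp
    have pp: "0 < p" using less by simp
    show ?thesis
    proof (cases "i + q < p")
      case True
      have m: "(i + q) mod q = i mod q" by simp
      have jj: "(i + q) mod p = i + q" using True by simp
      have A: "gr p q (i+q) = of_int (int p * int q - (2 * int (i+q) + 1 - int p - int q)^2) / of_int (4 * int p * int q) - gr q (p mod q) (i mod q)"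
        using gr_pos[OF qp, of p "i+q"] by (simp only: m)
      have B: "gr p q i = of_int (int p * int q - (2 * int i + 1 - int p - int q)^2) / of_int (4 * int p * int q) - gr q (p mod q) (i mod q)"
        using gr_pos[OF qp, of p i] .
      have "gr p q ((i + q) mod p) - gr p q i =
        of_int (int p * int q - (2 * int (i+q) + 1 - int p - int q)^2) / of_int (4 * int p * int q)
        - of_int (int p * int q - (2 * int i + 1 - int p - int q)^2) / of_int (4 * int p * int q)"
        unfolding jj A B by simp
      also have "\<dots> = (of_int (int p - 1 - 2 * int i)) / of_nat p"
        using alg1[of "int p" "int q" "int i"] qp pp by simp
      finally show ?thesis .
    next
      case False
      define m where "m = i + q - p"
      have mq: "m < q" using less False m_def by simp
      have im: "i = m + p - q" using False m_def less by simp
      have j: "(i + q) mod p = m" using False less m_def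
        by (simp add: mod_if)
      have iqm: "i + q = m + p" using m_def False by simp
      have "i mod q = (i + q) mod q" by simp
      also have "\<dots> = (m + p) mod q" using iqm by simp
      also have "\<dots> = (m + p mod q) mod q" by (simp add: mod_add_right_eq)
      finally have imq: "i mod q = (m + p mod q) mod q" .
      have cop: "coprime q (p mod q)" using less.prems(2)
        by (metis gcd_red_nat coprime_iff_gcd_eq_1)
      have IH: "gr q (p mod q) ((m + p mod q) mod q) - gr q (p mod q) m
          = of_int (int q - 1 - 2 * int m) / of_nat q"
        using less.IH[of "p mod q" q m] qp cop mq by simp
      have mm: "m mod q = m" using mq by simp
      have "gr p q ((i + q) mod p) - gr p q i =
        of_int (int p * int q - (2 * int m + 1 - int p - int q)^2) / of_int (4 * int p * int q)
        - of_int (int p * int q - (2 * int i + 1 - int p - int q)^2) / of_int (4 * int p * int q)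
        + (gr q (p mod q) ((m + p mod q) mod q) - gr q (p mod q) m)"
        using gr_pos[OF qp, of p m] gr_pos[OF qp, of p i] unfolding j mm imq by simp
      also have "\<dots> = of_int (int p * int q - (2 * int m + 1 - int p - int q)^2) / of_int (4 * int p * int q)
        - of_int (int p * int q - (2 * (int m + int p - int q) + 1 - int p - int q)^2) / of_int (4 * int p * int q)
        + of_int (int q - 1 - 2 * int m) / of_nat q"
        using IH im less by (simp add: of_nat_diff)
      also have "\<dots> = (of_int (int p - 1 - 2 * (int m + int p - int q))) / of_nat p"
        using alg2[of "int p" "int q" "int m"] qp pp by simp
      also have "\<dots> = (of_int (int p - 1 - 2 * int i)) / of_nat p"
        using im less by (simp add: of_nat_diff)
      finally show ?thesis .
    qed
  qed
qed

theorem corollary5p2: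
  fixes p q i :: nat
  assumes "0 < q" and "q < p" and "coprime p q" and "i < p"
  shows "gr p q ((i + q) mod p) - gr p q i = (of_int (int p - 1 - 2 * int i)) / of_nat p"
  using gen assms by blast

end
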